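(* Consider the single-task common ground mechanism (context), under the assumption that $X_A$ and $X_B$ are independent conditional on $Y$. Then truth-telling is a Bayesian Nash equilibrium; if moreover the prior is stable, truth-telling is a strict Bayesian Nash equilibrium (for every $x_A$, given that Bob is truthful, any report $\hat{\mathbf{p}}_{x_A}\ne\mathbf{p}_{x_A}$ yields Alice strictly smaller conditional expected payment, and symmetrically for Bob). Moreover, when both agents are truthful, each agent's expected payment equals the Shannon mutual information $I(X_A;X_B)=\sum_{x_A,x_B}\Pr[X_A=x_A,X_B=x_B]\log K(x_A,x_B)\ge 0$.
   Context: Let $\Sigma_A,\Sigma_B,\Sigma$ be finite nonempty sets and $(X_A,X_B,Y)$ random variables with values in $\Sigma_A\times\Sigma_B\times\Sigma$ (joint law = the prior), with all marginal probabilities positive. $\Delta_\Sigma$ is the set of probability vectors on $\Sigma$. $K(x_A,x_B):=\frac{\Pr[X_A=x_A,X_B=x_B]}{\Pr[X_A=x_A]\Pr[X_B=x_B]}$. Alice privately observes $X_A=x_A$, Bob observes $X_B=x_B$; their truthful reports are $\mathbf{p}_{x_A}:=(\Pr[Y=y\mid X_A=x_A])_y$ and $\mathbf{p}_{x_B}:=(\Pr[Y=y\mid X_B=x_B])_y$. A strategy maps the private signal to a (possibly random) report in $\Delta_\Sigma$. Common ground mechanism: given the prior $(\Pr[Y=y])_y$ and reports $\hat{\mathbf{p}}_{x_A},\hat{\mathbf{p}}_{x_B}$, both agents are paid $\log\sum_y\frac{\hat{\mathbf{p}}_{x_A}(y)\hat{\mathbf{p}}_{x_B}(y)}{\Pr[Y=y]}$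 (with $\log 0=-\infty$). Stable prior: consider the system in unknowns $\mathbf{a}^{x_A},\mathbf{b}^{x_B},\mathbf{r}\in\Delta_\Sigma$: $\sum_y a^{x_A}_yb^{x_B}_y/r_y=K(x_A,x_B)$ for all $(x_A,x_B)$. The prior is stable if, with $\mathbf{a}^{x_A}=\mathbf{p}_{x_A}$ for all $x_A$ and $\mathbf{r}=(\Pr[Y=y])_y$ fixed, the unique solution $\{\mathbf{b}^{x_B}\}$ is $\mathbf{b}^{x_B}=\mathbf{p}_{x_B}$, and with $\mathbf{b}^{x_B}=\mathbf{p}_{x_B}$ and $\mathbf{r}=(\Pr[Y=y])_y$ fixed, the unique solution $\{\mathbf{a}^{x_A}\}$ is $\mathbf{a}^{x_A}=\mathbf{p}_{x_A}$. *)

theory Defs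
  imports Complex_Main "HOL-Library.Extended_Real"
begin

text \<open>The prior is a joint probability mass function P on finite types:
  P xa xb y = Pr[X_A = xa, X_B = xb, Y = y].\<close>

definition simplex :: "('c::finite \<Rightarrow> real) set" where
  "simplex = {q. (\<forall>y. 0 \<le> q y) \<and> (\<Sum>y\<in>UNIV. q y) = 1}"

definition prA :: "('a::finite \<Rightarrow> 'b::finite \<Rightarrow> 'c::finite \<Rightarrow> real) \<Rightarrow> 'a \<Rightarrow> real" where
  "prA P xa = (\<Sum>xb\<in>UNIV. \<Sum>y\<in>UNIV. P xa xb y)"

definition prB :: "('a::finite \<Rightarrow> 'b::finite \<Rightarrow> 'c::finite \<Rightarrow> real) \<Rightarrow> 'b \<Rightarrow> real" where
  "prB P xb = (\<Sum>xa\<in>UNIV. \<Sum>y\<in>UNIV. P xa xb y)"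

definition prY :: "('a::finite \<Rightarrow> 'b::finite \<Rightarrow> 'c::finite \<Rightarrow> real) \<Rightarrow> 'c \<Rightarrow> real" where
  "prY P y = (\<Sum>xa\<in>UNIV. \<Sum>xb\<in>UNIV. P xa xb y)"

definition prAB :: "('a::finite \<Rightarrow> 'b::finite \<Rightarrow> 'c::finite \<Rightarrow> real) \<Rightarrow> 'a \<Rightarrow> 'b \<Rightarrow> real" where
  "prAB P xa xb = (\<Sum>y\<in>UNIV. P xa xb y)"

text \<open>Truthful reports: p_{x_A}(y) = Pr[Y=y | X_A=x_A], p_{x_B}(y) = Pr[Y=y | X_B=x_B].\<close>
definition postA :: "('a::finite \<Rightarrow> 'b::finite \<Rightarrow> 'c::finite \<Rightarrow> real) \<Rightarrow> 'a \<Rightarrow> 'c \<Rightarrow> real" where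
  "postA P xa y = (\<Sum>xb\<in>UNIV. P xa xb y) / prA P xa"

definition postB :: "('a::finite \<Rightarrow> 'b::finite \<Rightarrow> 'c::finite \<Rightarrow> real) \<Rightarrow> 'b \<Rightarrow> 'c \<Rightarrow> real" where
  "postB P xb y = (\<Sum>xa\<in>UNIV. P xa xb y) / prB P xb"

definition Kfun :: "('a::finite \<Rightarrow> 'b::finite \<Rightarrow> 'c::finite \<Rightarrow> real) \<Rightarrow> 'a \<Rightarrow> 'b \<Rightarrow> real" where
  "Kfun P xa xb = prAB P xa xb / (prA P xa * prB P xb)"

definition cond_indep :: "('a::finite \<Rightarrow> 'b::finite \<Rightarrow> 'c::finite \<Rightarrow> real) \<Rightarrow> bool" where
  "cond_indep P \<longleftrightarrow>
     (\<forall>xa xb y. P xa xb y * prY P y = (\<Sum>xb'\<in>UNIV. P xa xb' y) * (\<Sum>xa'\<in>UNIV. P xa' xb y))"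

definition cg_payment :: "('a::finite \<Rightarrow> 'b::finite \<Rightarrow> 'c::finite \<Rightarrow> real)
    \<Rightarrow> ('c \<Rightarrow> real) \<Rightarrow> ('c \<Rightarrow> real) \<Rightarrow> ereal" where
  "cg_payment P qa qb =
     (let s = (\<Sum>y\<in>UNIV. qa y * qb y / prY P y) in if s = 0 then -\<infinity> else ereal (ln s))"

definition alice_exp :: "('a::finite \<Rightarrow> 'b::finite \<Rightarrow> 'c::finite \<Rightarrow> real) \<Rightarrow> 'a \<Rightarrow> ('c \<Rightarrow> real) \<Rightarrow> ereal" where
  "alice_exp P xa q = (\<Sum>xb\<in>UNIV. ereal (prAB P xa xb / prA P xa) * cg_payment P q (postB P xb))"

definition bob_exp :: "('a::finite \<Rightarrow> 'b::finite \<Rightarrow> 'c::finite \<Rightarrow> real) \<Rightarrow> 'b \<Rightarrow> ('c \<Rightarrow> real) \<Rightarrow> ereal" where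
  "bob_exp P xb q = (\<Sum>xa\<in>UNIV. ereal (prAB P xa xb / prB P xb) * cg_payment P (postA P xa) q)"

definition truthful_exp :: "('a::finite \<Rightarrow> 'b::finite \<Rightarrow> 'c::finite \<Rightarrow> real) \<Rightarrow> ereal" where
  "truthful_exp P = (\<Sum>xa\<in>UNIV. \<Sum>xb\<in>UNIV. ereal (prAB P xa xb) * cg_payment P (postA P xa) (postB P xb))"

definition mutual_info :: "('a::finite \<Rightarrow> 'b::finite \<Rightarrow> 'c::finite \<Rightarrow> real) \<Rightarrow> real" where
  "mutual_info P = (\<Sum>xa\<in>UNIV. \<Sum>xb\<in>UNIV.
     if prAB P xa xb = 0 then 0 else prAB P xa xb * ln (Kfun P xa xb))"

definition stable_prior :: "('a::finite \<Rightarrow> 'b::finite \<Rightarrow> 'c::finite \<Rightarrow> real) \<Rightarrow> bool" where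
  "stable_prior P \<longleftrightarrow>
     (\<forall>b :: 'b \<Rightarrow> 'c \<Rightarrow> real.
        (\<forall>xb. b xb \<in> simplex) \<and>
        (\<forall>xa xb. (\<Sum>y\<in>UNIV. postA P xa y * b xb y / prY P y) = Kfun P xa xb)
        \<longrightarrow> b = postB P) \<and>
     (\<forall>a :: 'a \<Rightarrow> 'c \<Rightarrow> real.
        (\<forall>xa. a xa \<in> simplex) \<and>
        (\<forall>xa xb. (\<Sum>y\<in>UNIV. a xa y * postB P xb y / prY P y) = Kfun P xa xb)
        \<longrightarrow> a = postA P)"

end

theory Submission imports Defs begin

context
  fixes P :: "'a::finite \<Rightarrow> 'b::finite \<Rightarrow> 'c::finite \<Rightarrow> real"
  assumes nonneg: "\<And>xa xb y. 0 \<le> P xa xb y"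
    and posA: "\<And>xa. 0 < prA P xa"
    and posB: "\<And>xb. 0 < prB P xb"
    and posY: "\<And>y. 0 < prY P y"
    and ci: "cond_indep P"
begin

lemma prAB_nonneg: "0 \<le> prAB P xa xb"
  unfolding prAB_def by (simp add: sum_nonneg nonneg)

lemma sum_prAB: "(\<Sum>xb\<in>UNIV. prAB P xa xb) = prA P xa"
  unfolding prAB_def prA_def ..

lemma postA_simplex: "postA P xa \<in> simplex"
proof -
  have "(\<Sum>y\<in>UNIV. \<Sum>xb\<in>UNIV. P xa xb y) = prA P xa"
    unfolding prA_def by (rule sum.swap)
  then show ?thesis using posA[of xa]
    unfolding simplex_def postA_def
    by (auto simp: sum_divide_distrib[symmetric] sum_nonneg nonneg)
qed

lemma postB_simplex: "postB P xb \<in> simplex"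
proof -
  have "(\<Sum>y\<in>UNIV. \<Sum>xa\<in>UNIV. P xa xb y) = prB P xb"
    unfolding prB_def by (rule sum.swap)
  then show ?thesis using posB[of xb]
    unfolding simplex_def postB_def
    by (auto simp: sum_divide_distrib[symmetric] sum_nonneg nonneg)
qed

lemma postB_nonneg: "0 \<le> postB P xb y"
  using postB_simplex unfolding simplex_def by auto

lemma kid: "(\<Sum>y\<in>UNIV. postA P xa y * postB P xb y / prY P y) = Kfun P xa xb"
proof -
  have "postA P xa y * postB P xb y / prY P y = P xa xb y / (prA P xa * prB P xb)" for y
  proof -
    have e: "P xa xb y * prY P y = (\<Sum>xb'\<in>UNIV. P xa xb' y) * (\<Sum>xa'\<in>UNIV. P xa' xb y)"
      using ci unfolding cond_indep_def by blast
    show ?thesis using posA[of xa] posB[of xb] posY[of y]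
      unfolding postA_def postB_def using e
      by (simp add: field_simps)
  qed
  then show ?thesis unfolding Kfun_def prAB_def
    by (simp add: sum_divide_distrib[symmetric])
qed

lemma sum_prB_postB: "(\<Sum>xb\<in>UNIV. prB P xb * postB P xb y) = prY P y"
proof -
  have "(\<Sum>xb\<in>UNIV. prB P xb * postB P xb y) = (\<Sum>xb\<in>UNIV. \<Sum>xa\<in>UNIV. P xa xb y)"
    using posB unfolding postB_def by (simp add: less_imp_neq[symmetric])
  also have "\<dots> = prY P y" unfolding prY_def by (rule sum.swap)
  finally show ?thesis .
qed

lemma sum_prB_f: "q \<in> simplex \<Longrightarrow>
   (\<Sum>xb\<in>UNIV. prB P xb * (\<Sum>y\<in>UNIV. q y * postB P xb y / prY P y)) = 1"
proof -
  assume q: "q \<in> simplex"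
  have "(\<Sum>xb\<in>UNIV. prB P xb * (\<Sum>y\<in>UNIV. q y * postB P xb y / prY P y))
      = (\<Sum>y\<in>UNIV. q y / prY P y * (\<Sum>xb\<in>UNIV. prB P xb * postB P xb y))"
  proof -
    have "(\<Sum>xb\<in>UNIV. prB P xb * (\<Sum>y\<in>UNIV. q y * postB P xb y / prY P y))
        = (\<Sum>xb\<in>UNIV. \<Sum>y\<in>UNIV. q y / prY P y * (prB P xb * postB P xb y))"
      by (simp add: sum_distrib_left mult_ac)
    also have "\<dots> = (\<Sum>y\<in>UNIV. \<Sum>xb\<in>UNIV. q y / prY P y * (prB P xb * postB P xb y))"
      by (rule sum.swap)
    also have "\<dots> = (\<Sum>y\<in>UNIV. q y / prY P y * (\<Sum>xb\<in>UNIV. prB P xb * postB P xb y))"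
      by (simp add: sum_distrib_left)
    finally show ?thesis .
  qed
  also have "\<dots> = (\<Sum>y\<in>UNIV. q y)"
    using posY by (simp add: sum_prB_postB less_imp_neq[symmetric])
  finally show ?thesis using q unfolding simplex_def by simp
qed

lemma K_pos: "prAB P xa xb \<noteq> 0 \<Longrightarrow> 0 < Kfun P xa xb"
  using prAB_nonneg[of xa xb] posA[of xa] posB[of xb] unfolding Kfun_def by simp

lemma K_zero: "prAB P xa xb = 0 \<Longrightarrow> Kfun P xa xb = 0"
  unfolding Kfun_def by simp

lemma w_over_K: "prAB P xa xb \<noteq> 0 \<Longrightarrow> prAB P xa xb / prA P xa / Kfun P xa xb = prB P xb"
  using posA[of xa] posB[of xb] unfolding Kfun_def by (simp add: field_simps)


lemma term_bound:
  fixes q xa xb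
  defines "w \<equiv> prAB P xa xb / prA P xa"
    and "f \<equiv> (\<Sum>y\<in>UNIV. q y * postB P xb y / prY P y)"
  assumes q: "q \<in> simplex"
  shows "ereal w * cg_payment P q (postB P xb)
     \<le> ereal ((if prAB P xa xb = 0 then 0 else w * ln (Kfun P xa xb)) + prB P xb * f - w)"
proof -
  have f0: "0 \<le> f" unfolding f_def using q posY postB_nonneg
    by (auto simp: simplex_def intro!: sum_nonneg divide_nonneg_pos)
  have cg: "cg_payment P q (postB P xb) = (if f = 0 then -\<infinity> else ereal (ln f))"
    unfolding cg_payment_def f_def Let_def by simp
  show ?thesis
  proof (cases "prAB P xa xb = 0")
    case True
    then show ?thesis using f0 posB[of xb] unfolding w_def
      by (simp add: zero_ereal_def[symmetric])
  next
    case False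
    have wpos: "0 < w" using False prAB_nonneg[of xa xb] posA[of xa] unfolding w_def by simp
    have Kp: "0 < Kfun P xa xb" using K_pos False by blast
    show ?thesis
    proof (cases "f = 0")
      case True then show ?thesis using cg wpos by simp
    next
      case fne: False
      then have fp: "0 < f" using f0 by simp
      have "ln (f / Kfun P xa xb) \<le> f / Kfun P xa xb - 1"
        using fp Kp by (intro ln_le_minus_one) simp
      then have "w * ln (f / Kfun P xa xb) \<le> w * (f / Kfun P xa xb - 1)"
        using wpos by (simp add: mult_left_mono)
      moreover have "w * (f / Kfun P xa xb) = prB P xb * f"
      proof -
        have "w * (f / Kfun P xa xb) = (w / Kfun P xa xb) * f" by simp
        also have "\<dots> = prB P xb * f" unfolding w_def by (simp only: w_over_K[OF False])
        finally show ?thesis .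
      qed
      ultimately have "w * ln f \<le> w * ln (Kfun P xa xb) + prB P xb * f - w"
        using fp Kp by (simp add: ln_div right_diff_distrib)
      then show ?thesis using cg fne False by simp
    qed
  qed
qed


definition "TT xa = (\<Sum>xb\<in>UNIV. if prAB P xa xb = 0 then 0 else prAB P xa xb / prA P xa * ln (Kfun P xa xb))"

lemma sum_w: "(\<Sum>xb\<in>UNIV. prAB P xa xb / prA P xa) = 1"
  using posA[of xa] by (simp add: sum_divide_distrib[symmetric] sum_prAB)

lemma alice_truth: "alice_exp P xa (postA P xa) = ereal (TT xa)"
proof -
  have "ereal (prAB P xa xb / prA P xa) * cg_payment P (postA P xa) (postB P xb)
     = ereal (if prAB P xa xb = 0 then 0 else prAB P xa xb / prA P xa * ln (Kfun P xa xb))" for xb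
  proof (cases "prAB P xa xb = 0")
    case True then show ?thesis by (simp add: zero_ereal_def[symmetric])
  next
    case False
    then have "Kfun P xa xb \<noteq> 0" using K_pos by force
    then show ?thesis using False unfolding cg_payment_def Let_def kid by simp
  qed
  then show ?thesis unfolding alice_exp_def TT_def by simp
qed

lemma alice_le:
  assumes q: "q \<in> simplex"
  shows "alice_exp P xa q \<le> ereal (TT xa)"
proof -
  let ?w = "\<lambda>xb. prAB P xa xb / prA P xa"
  let ?f = "\<lambda>xb. (\<Sum>y\<in>UNIV. q y * postB P xb y / prY P y)"
  have "alice_exp P xa q \<le> (\<Sum>xb\<in>UNIV. ereal ((if prAB P xa xb = 0 then 0 else ?w xb * ln (Kfun P xa xb)) + prB P xb * ?f xb - ?w xb))"
    unfolding alice_exp_def by (rule sum_mono) (rule term_bound[OF q])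
  also have "\<dots> = ereal (TT xa + 1 - 1)"
    using sum_prB_f[OF q] sum_w[of xa]
    by (simp add: sum.distrib sum_subtractf TT_def)
  finally show ?thesis by simp
qed

lemma alice_eq:
  assumes q: "q \<in> simplex"
    and nl: "\<not> alice_exp P xa q < ereal (TT xa)"
  shows "(\<Sum>y\<in>UNIV. q y * postB P xb0 y / prY P y) = Kfun P xa xb0"
proof -
  let ?w = "\<lambda>xb. prAB P xa xb / prA P xa"
  let ?f = "\<lambda>xb. (\<Sum>y\<in>UNIV. q y * postB P xb y / prY P y)"
  let ?g = "\<lambda>xb. (if prAB P xa xb = 0 then 0 else ?w xb * ln (Kfun P xa xb)) + prB P xb * ?f xb - ?w xb"
  let ?t = "\<lambda>xb. ereal (?w xb) * cg_payment P q (postB P xb)"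
  have f0: "0 \<le> ?f xb" for xb using q posY postB_nonneg
    by (auto simp: simplex_def intro!: sum_nonneg divide_nonneg_pos)
  have tb: "?t xb \<le> ereal (?g xb)" for xb by (rule term_bound[OF q])
  have sg: "(\<Sum>xb\<in>UNIV. ?g xb) = TT xa"
    using sum_prB_f[OF q] sum_w[of xa]
    by (simp add: sum.distrib sum_subtractf TT_def)
  have cg: "cg_payment P q (postB P xb) = (if ?f xb = 0 then -\<infinity> else ereal (ln (?f xb)))" for xb
    unfolding cg_payment_def Let_def by simp
  show ?thesis
  proof (cases "\<exists>xb. prAB P xa xb \<noteq> 0 \<and> ?f xb = 0")
    case True
    then obtain xb where xb: "prAB P xa xb \<noteq> 0" "?f xb = 0" by blast
    have wpos: "0 < ?w xb" using xb prAB_nonneg[of xa xb] posA[of xa] by simp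
    have t1: "?t xb = -\<infinity>" using xb wpos cg[of xb] by (simp add: less_imp_neq[symmetric] posA)
    have "(\<Sum>x\<in>UNIV - {xb}. ?t x) \<le> (\<Sum>x\<in>UNIV - {xb}. ereal (?g x))"
      by (rule sum_mono) (rule tb)
    then have "(\<Sum>x\<in>UNIV - {xb}. ?t x) \<noteq> \<infinity>" by auto
    moreover have "alice_exp P xa q = ?t xb + (\<Sum>x\<in>UNIV - {xb}. ?t x)"
      unfolding alice_exp_def by (rule sum.remove) auto
    ultimately have "alice_exp P xa q = -\<infinity>" using t1 by simp
    then show ?thesis using nl by simp
  next
    case False
    let ?h = "\<lambda>xb. if prAB P xa xb = 0 then 0 else ?w xb * ln (?f xb)"
    have th: "?t xb = ereal (?h xb)" for xb
      using False cg[of xb] by (auto simp: zero_ereal_def[symmetric])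
    have "alice_exp P xa q = ereal (\<Sum>xb\<in>UNIV. ?h xb)"
      unfolding alice_exp_def using th by simp
    then have ge: "TT xa \<le> (\<Sum>xb\<in>UNIV. ?h xb)" using nl by simp
    have hg: "?h xb \<le> ?g xb" for xb using tb[of xb] th[of xb] by simp
    have heq: "?h xb = ?g xb" for xb
    proof (rule ccontr)
      assume ne: "?h xb \<noteq> ?g xb"
      have "(\<Sum>xb\<in>UNIV. ?h xb) < (\<Sum>xb\<in>UNIV. ?g xb)"
      proof (rule sum_strict_mono_ex1)
        show "\<forall>x\<in>UNIV. ?h x \<le> ?g x" using hg by blast
        show "\<exists>a\<in>UNIV. ?h a < ?g a" using hg[of xb] ne by (intro bexI[of _ xb]) auto
      qed simp
      then show False using ge sg by simp
    qed
    show ?thesis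
    proof (cases "prAB P xa xb0 = 0")
      case True
      then have "prB P xb0 * ?f xb0 = 0" using heq[of xb0] by simp
      then show ?thesis using posB[of xb0] K_zero[OF True] by simp
    next
      case nz: False
      have wpos: "0 < ?w xb0" using nz prAB_nonneg[of xa xb0] posA[of xa] by simp
      have Kp: "0 < Kfun P xa xb0" using K_pos nz by blast
      have fp: "0 < ?f xb0" using False nz f0[of xb0] by force
      have wk: "?w xb0 * (?f xb0 / Kfun P xa xb0) = prB P xb0 * ?f xb0"
      proof -
        have "?w xb0 * (?f xb0 / Kfun P xa xb0) = (?w xb0 / Kfun P xa xb0) * ?f xb0" by simp
        also have "\<dots> = prB P xb0 * ?f xb0" by (simp only: w_over_K[OF nz])
        finally show ?thesis .
      qed
      have "?w xb0 * ln (?f xb0) = ?w xb0 * ln (Kfun P xa xb0) + ?w xb0 * (?f xb0 / Kfun P xa xb0) - ?w xb0"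
        using heq[of xb0] nz wk by simp
      then have "?w xb0 * ln (?f xb0 / Kfun P xa xb0) = ?w xb0 * (?f xb0 / Kfun P xa xb0 - 1)"
        using fp Kp by (simp add: ln_div right_diff_distrib)
      then have "ln (?f xb0 / Kfun P xa xb0) = ?f xb0 / Kfun P xa xb0 - 1"
        using wpos nz posA[of xa] by (auto simp: less_imp_neq[symmetric])
      then have "?f xb0 / Kfun P xa xb0 = 1"
        using fp Kp by (intro ln_eq_minus_one) auto
      then show ?thesis using Kp by simp
    qed
  qed
qed


lemma alice_all1: "\<forall>xa. \<forall>q\<in>simplex. alice_exp P xa q \<le> alice_exp P xa (postA P xa)"
  using alice_le alice_truth by simp

lemma alice_all2:
  assumes st: "\<forall>a :: 'a \<Rightarrow> 'c \<Rightarrow> real.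
        (\<forall>xa. a xa \<in> simplex) \<and>
        (\<forall>xa xb. (\<Sum>y\<in>UNIV. a xa y * postB P xb y / prY P y) = Kfun P xa xb)
        \<longrightarrow> a = postA P"
  shows "\<forall>xa. \<forall>q\<in>simplex. q \<noteq> postA P xa \<longrightarrow> alice_exp P xa q < alice_exp P xa (postA P xa)"
proof (intro allI ballI impI)
  fix xa q assume q: "q \<in> simplex" and ne: "q \<noteq> postA P xa"
  show "alice_exp P xa q < alice_exp P xa (postA P xa)"
  proof (rule ccontr)
    assume nl: "\<not> ?thesis"
    let ?a = "(postA P)(xa := q)"
    have "\<forall>xa'. ?a xa' \<in> simplex" using q postA_simplex by simp
    moreover have "\<forall>xa' xb. (\<Sum>y\<in>UNIV. ?a xa' y * postB P xb y / prY P y) = Kfun P xa' xb"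
    proof (intro allI)
      fix xa' xb
      show "(\<Sum>y\<in>UNIV. ?a xa' y * postB P xb y / prY P y) = Kfun P xa' xb"
      proof (cases "xa' = xa")
        case True
        have "\<not> alice_exp P xa q < ereal (TT xa)" using nl unfolding alice_truth .
        then show ?thesis using True alice_eq[OF q] by simp
      next
        case False then show ?thesis using kid by simp
      qed
    qed
    ultimately have "?a = postA P" using st by blast
    then have "?a xa = postA P xa" by simp
    then show False using ne by simp
  qed
qed

lemma truthful_mi: "truthful_exp P = ereal (mutual_info P)"
proof -
  have "ereal (prAB P xa xb) * cg_payment P (postA P xa) (postB P xb)
     = ereal (if prAB P xa xb = 0 then 0 else prAB P xa xb * ln (Kfun P xa xb))" for xa xb
  proof (cases "prAB P xa xb = 0")
    case True then show ?thesis by (simp add: zero_ereal_def[symmetric])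
  next
    case False
    then have "Kfun P xa xb \<noteq> 0" using K_pos by force
    then show ?thesis using False unfolding cg_payment_def Let_def kid by simp
  qed
  then show ?thesis unfolding truthful_exp_def mutual_info_def by simp
qed

lemma mi_nonneg:
  assumes total: "(\<Sum>xa\<in>UNIV. \<Sum>xb\<in>UNIV. \<Sum>y\<in>UNIV. P xa xb y) = 1"
  shows "0 \<le> mutual_info P"
proof -
  have tb: "prAB P xa xb - prA P xa * prB P xb \<le> (if prAB P xa xb = 0 then 0 else prAB P xa xb * ln (Kfun P xa xb))" for xa xb
  proof (cases "prAB P xa xb = 0")
    case True then show ?thesis using posA[of xa] posB[of xb] by simp
  next
    case False
    have Kp: "0 < Kfun P xa xb" using K_pos False by blast
    have pp: "0 < prAB P xa xb" using False prAB_nonneg[of xa xb] by simp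
    have "ln (1 / Kfun P xa xb) \<le> 1 / Kfun P xa xb - 1" using Kp by (intro ln_le_minus_one) simp
    then have "prAB P xa xb * ln (1 / Kfun P xa xb) \<le> prAB P xa xb * (1 / Kfun P xa xb - 1)"
      using pp by (simp add: mult_left_mono)
    moreover have "prAB P xa xb * (1 / Kfun P xa xb) = prA P xa * prB P xb"
      using False posA[of xa] posB[of xb] unfolding Kfun_def by (simp add: field_simps)
    ultimately show ?thesis using False Kp by (simp add: ln_div right_diff_distrib)
  qed
  have s1: "(\<Sum>xa\<in>UNIV. \<Sum>xb\<in>UNIV. prAB P xa xb) = 1" using total unfolding prAB_def .
  have sa: "(\<Sum>xa\<in>UNIV. prA P xa) = 1" using total unfolding prA_def .
  have sb: "(\<Sum>xb\<in>UNIV. prB P xb) = 1"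
  proof -
    have "(\<Sum>xb\<in>UNIV. prB P xb) = (\<Sum>xb\<in>UNIV. \<Sum>xa\<in>UNIV. \<Sum>y\<in>UNIV. P xa xb y)"
      unfolding prB_def ..
    also have "\<dots> = (\<Sum>xa\<in>UNIV. \<Sum>xb\<in>UNIV. \<Sum>y\<in>UNIV. P xa xb y)" by (rule sum.swap)
    finally show ?thesis using total by simp
  qed
  have "(\<Sum>xa\<in>UNIV. \<Sum>xb\<in>UNIV. prA P xa * prB P xb) = 1"
    using sa sb by (simp add: sum_product[symmetric])
  then have "0 = (\<Sum>xa\<in>UNIV. \<Sum>xb\<in>UNIV. prAB P xa xb - prA P xa * prB P xb)"
    using s1 by (simp add: sum_subtractf)
  also have "\<dots> \<le> mutual_info P" unfolding mutual_info_def
    by (intro sum_mono tb)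
  finally show ?thesis .
qed

end

definition tr :: "('a::finite \<Rightarrow> 'b::finite \<Rightarrow> 'c::finite \<Rightarrow> real) \<Rightarrow> 'b \<Rightarrow> 'a \<Rightarrow> 'c \<Rightarrow> real" where
  "tr P = (\<lambda>xb xa y. P xa xb y)"

lemma tr_prA: "prA (tr P) = prB P" unfolding tr_def prA_def prB_def by (rule ext) simp
lemma tr_prB: "prB (tr P) = prA P" unfolding tr_def prA_def prB_def by (rule ext) simp
lemma tr_prY: "prY (tr P) = prY P" unfolding tr_def prY_def by (rule ext) (rule sum.swap)
lemma tr_prAB: "prAB (tr P) xb xa = prAB P xa xb" unfolding tr_def prAB_def by simp
lemma tr_postA: "postA (tr P) = postB P" unfolding postA_def postB_def tr_prA by (simp add: tr_def)
lemma tr_postB: "postB (tr P) = postA P" unfolding postA_def postB_def tr_prB by (simp add: tr_def)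
lemma tr_K: "Kfun (tr P) xb xa = Kfun P xa xb" unfolding Kfun_def tr_prAB tr_prA tr_prB by (simp add: mult.commute)
lemma tr_cg: "cg_payment (tr P) qa qb = cg_payment P qb qa" unfolding cg_payment_def tr_prY by (simp add: mult.commute)
lemma tr_bob: "bob_exp P xb q = alice_exp (tr P) xb q"
  unfolding bob_exp_def alice_exp_def tr_cg tr_prAB tr_prA tr_postB ..
lemma tr_ci: "cond_indep P \<Longrightarrow> cond_indep (tr P)"
  unfolding cond_indep_def tr_prY by (simp add: tr_def mult.commute)

theorem mainTheorem6:
  fixes P :: "'a::finite \<Rightarrow> 'b::finite \<Rightarrow> 'c::finite \<Rightarrow> real"
  assumes nonneg: "\<And>xa xb y. 0 \<le> P xa xb y"
    and total: "(\<Sum>xa\<in>UNIV. \<Sum>xb\<in>UNIV. \<Sum>y\<in>UNIV. P xa xb y) = 1"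
    and posA: "\<And>xa. 0 < prA P xa"
    and posB: "\<And>xb. 0 < prB P xb"
    and posY: "\<And>y. 0 < prY P y"
    and ci: "cond_indep P"
  shows
    "(\<forall>xa. \<forall>q\<in>simplex. alice_exp P xa q \<le> alice_exp P xa (postA P xa)) \<and>
     (\<forall>xb. \<forall>q\<in>simplex. bob_exp P xb q \<le> bob_exp P xb (postB P xb)) \<and>
     (stable_prior P \<longrightarrow>
        (\<forall>xa. \<forall>q\<in>simplex. q \<noteq> postA P xa \<longrightarrow> alice_exp P xa q < alice_exp P xa (postA P xa)) \<and>
        (\<forall>xb. \<forall>q\<in>simplex. q \<noteq> postB P xb \<longrightarrow> bob_exp P xb q < bob_exp P xb (postB P xb))) \<and>
     truthful_exp P = ereal (mutual_info P) \<and>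
     0 \<le> mutual_info P"
proof -
  note A = nonneg posA posB posY ci
  have nT: "\<And>xb xa y. 0 \<le> tr P xb xa y" using nonneg by (simp add: tr_def)
  have pAT: "\<And>xb. 0 < prA (tr P) xb" using posB by (simp add: tr_prA)
  have pBT: "\<And>xa. 0 < prB (tr P) xa" using posA by (simp add: tr_prB)
  have pYT: "\<And>y. 0 < prY (tr P) y" using posY by (simp add: tr_prY)
  note B = nT pAT pBT pYT tr_ci[OF ci]
  have bob1: "\<forall>xb. \<forall>q\<in>simplex. bob_exp P xb q \<le> bob_exp P xb (postB P xb)"
    using alice_all1[OF B] unfolding tr_bob tr_postA .
  have strict: "(\<forall>xa. \<forall>q\<in>simplex. q \<noteq> postA P xa \<longrightarrow> alice_exp P xa q < alice_exp P xa (postA P xa)) \<and>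
        (\<forall>xb. \<forall>q\<in>simplex. q \<noteq> postB P xb \<longrightarrow> bob_exp P xb q < bob_exp P xb (postB P xb))"
    if st: "stable_prior P"
  proof
    show "\<forall>xa. \<forall>q\<in>simplex. q \<noteq> postA P xa \<longrightarrow> alice_exp P xa q < alice_exp P xa (postA P xa)"
      by (rule alice_all2[OF A]) (use st in \<open>simp add: stable_prior_def\<close>)
    have st2: "\<forall>a :: 'b \<Rightarrow> 'c \<Rightarrow> real.
        (\<forall>xb. a xb \<in> simplex) \<and>
        (\<forall>xb xa. (\<Sum>y\<in>UNIV. a xb y * postB (tr P) xa y / prY (tr P) y) = Kfun (tr P) xb xa)
        \<longrightarrow> a = postA (tr P)"
      using st unfolding stable_prior_def tr_postB tr_prY tr_K tr_postA
      by (simp add: mult.commute)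
    show "\<forall>xb. \<forall>q\<in>simplex. q \<noteq> postB P xb \<longrightarrow> bob_exp P xb q < bob_exp P xb (postB P xb)"
      using alice_all2[OF B st2] unfolding tr_bob tr_postA .
  qed
  show ?thesis
    apply (intro conjI)
        apply (rule alice_all1[OF A])
       apply (rule bob1)
      apply (rule impI, erule strict)
     apply (rule truthful_mi[OF A])
    apply (rule mi_nonneg[OF A total])
    done
qed

end
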